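(* Let $R$ be a noetherian integral domain, $n\ge1$, $R[n]=R[t]/(t^n)$, and $M$ an $R[n]$-module of finite type. Then $\mathrm{Ext}^1_{R[n]}(M,R[n])$ is a torsion module.
   Context: An element $u=\sum_{i=0}^{n-1}u_it^i\in R[n]$ ($u_i\in R$) is a non-zero-divisor iff $u_0\ne0$; let $S_n$ be the set of non-zero-divisors. For an $R[n]$-module $N$, the torsion submodule $T(N)$ is the set of $m\in N$ such that $\alpha m=0$ for some $\alpha\in S_n$; $N$ is a torsion module if $N=T(N)$. *)

theory Defs
  imports "HOL-Computational_Algebra.Polynomial" "HOL-Algebra.Module"
begin

definition is_ideal :: "'a::comm_ring_1 set \<Rightarrow> bool" where
  "is_ideal I \<longleftrightarrow> 0 \<in> I \<and> (\<forall>x\<in>I. \<forall>y\<in>I. x + y \<in> I) \<and> (\<forall>r. \<forall>x\<in>I. r * x \<in> I)"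

definition ideal_gen :: "'a::comm_ring_1 set \<Rightarrow> 'a set" where
  "ideal_gen A = {x. \<exists>c. x = (\<Sum>a\<in>A. c a * a)}"

definition noetherian_ring :: "'a::comm_ring_1 itself \<Rightarrow> bool" where
  "noetherian_ring _ \<longleftrightarrow>
     (\<forall>I::'a set. is_ideal I \<longrightarrow> (\<exists>A. finite A \<and> A \<subseteq> I \<and> I = ideal_gen A))"

text \<open>Elements of R[n] are represented by polynomials of degree < n; multiplication
  is polynomial multiplication followed by truncation (reduction mod t^n).\<close>

definition trunc_poly :: "nat \<Rightarrow> 'a::comm_ring_1 poly \<Rightarrow> 'a poly" where
  "trunc_poly n p = (\<Sum>i<n. monom (coeff p i) i)"

definition Rn :: "nat \<Rightarrow> 'a::comm_ring_1 poly ring" where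
  "Rn n = \<lparr>carrier = {p. degree p < n}, mult = (\<lambda>p q. trunc_poly n (p * q)),
           one = 1, zero = 0, add = (+)\<rparr>"

text \<open>The set S_n of non-zero-divisors of R[n] (those u with u_0 \<noteq> 0).\<close>
definition Sn :: "nat \<Rightarrow> 'a::comm_ring_1 poly set" where
  "Sn n = {u \<in> carrier (Rn n). coeff u 0 \<noteq> 0}"

definition Rn_mod :: "nat \<Rightarrow> ('a::comm_ring_1 poly, 'a poly) module" where
  "Rn_mod n = \<lparr>carrier = {p. degree p < n}, mult = (\<lambda>p q. trunc_poly n (p * q)),
           one = 1, zero = 0, add = (+), smult = (\<lambda>a p. trunc_poly n (a * p))\<rparr>"

text \<open>The free R[n]-module R[n]^k, vectors as functions nat => R[n] supported on {..<k}.
  (The ring fields mult/one of the module record are irrelevant dummies.)\<close>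
definition free_mod :: "nat \<Rightarrow> nat \<Rightarrow> ('a::comm_ring_1 poly, nat \<Rightarrow> 'a poly) module" where
  "free_mod n k = \<lparr>carrier = {v. (\<forall>i<k. degree (v i) < n) \<and> (\<forall>i\<ge>k. v i = 0)},
       mult = (\<lambda>v w. (\<lambda>i. 0)), one = (\<lambda>i. 0), zero = (\<lambda>i. 0),
       add = (\<lambda>v w i. v i + w i), smult = (\<lambda>a v i. trunc_poly n (a * v i))\<rparr>"

definition mod_hom :: "('r, 'x) ring_scheme \<Rightarrow> ('r, 'b, 'c) module_scheme
    \<Rightarrow> ('r, 'd, 'e) module_scheme \<Rightarrow> ('b \<Rightarrow> 'd) \<Rightarrow> bool" where
  "mod_hom R M N f \<longleftrightarrow>
     f \<in> carrier M \<rightarrow> carrier N \<and>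
     (\<forall>x\<in>carrier M. \<forall>y\<in>carrier M. f (x \<oplus>\<^bsub>M\<^esub> y) = f x \<oplus>\<^bsub>N\<^esub> f y) \<and>
     (\<forall>a\<in>carrier R. \<forall>x\<in>carrier M. f (a \<odot>\<^bsub>M\<^esub> x) = a \<odot>\<^bsub>N\<^esub> f x)"

definition finite_type :: "('r, 'x) ring_scheme \<Rightarrow> ('r, 'b, 'c) module_scheme \<Rightarrow> bool" where
  "finite_type R M \<longleftrightarrow>
     (\<exists>A. finite A \<and> A \<subseteq> carrier M \<and>
        (\<forall>x\<in>carrier M. \<exists>c \<in> A \<rightarrow> carrier R. x = finsum M (\<lambda>a. c a \<odot>\<^bsub>M\<^esub> a) A))"

text \<open>Given a surjective R[n]-linear map pi : R[n]^k -> M with kernel K,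
  Ext^1(M,N) = Hom(K,N) / {restrictions to K of maps R[n]^k -> N}.\<close>

definition pres_kernel :: "nat \<Rightarrow> nat \<Rightarrow> ((nat \<Rightarrow> 'a::comm_ring_1 poly) \<Rightarrow> 'b)
    \<Rightarrow> ('a poly, 'b, 'c) module_scheme \<Rightarrow> (nat \<Rightarrow> 'a poly) set" where
  "pres_kernel n k \<pi> M = {v \<in> carrier (free_mod n k). \<pi> v = \<zero>\<^bsub>M\<^esub>}"

definition is_presentation :: "nat \<Rightarrow> nat \<Rightarrow> ((nat \<Rightarrow> 'a::comm_ring_1 poly) \<Rightarrow> 'b)
    \<Rightarrow> ('a poly, 'b, 'c) module_scheme \<Rightarrow> bool" where
  "is_presentation n k \<pi> M \<longleftrightarrow>
     mod_hom (Rn n) (free_mod n k) M \<pi> \<and> \<pi> ` carrier (free_mod n k) = carrier M"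

definition ext1_cocycles :: "nat \<Rightarrow> nat \<Rightarrow> ((nat \<Rightarrow> 'a::comm_ring_1 poly) \<Rightarrow> 'b)
    \<Rightarrow> ('a poly, 'b, 'c) module_scheme \<Rightarrow> ('a poly, 'd, 'e) module_scheme
    \<Rightarrow> ((nat \<Rightarrow> 'a poly) \<Rightarrow> 'd) set" where
  "ext1_cocycles n k \<pi> M N =
     {\<phi>. mod_hom (Rn n) ((free_mod n k)\<lparr>carrier := pres_kernel n k \<pi> M\<rparr>) N \<phi>}"

definition ext1_coboundary :: "nat \<Rightarrow> nat \<Rightarrow> ((nat \<Rightarrow> 'a::comm_ring_1 poly) \<Rightarrow> 'b)
    \<Rightarrow> ('a poly, 'b, 'c) module_scheme \<Rightarrow> ('a poly, 'd, 'e) module_scheme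
    \<Rightarrow> ((nat \<Rightarrow> 'a poly) \<Rightarrow> 'd) \<Rightarrow> bool" where
  "ext1_coboundary n k \<pi> M N \<phi> \<longleftrightarrow>
     (\<exists>\<psi>. mod_hom (Rn n) (free_mod n k) N \<psi> \<and> (\<forall>v\<in>pres_kernel n k \<pi> M. \<psi> v = \<phi> v))"

definition Ext1_is_torsion :: "nat \<Rightarrow> ('a::comm_ring_1 poly, 'b, 'c) module_scheme
    \<Rightarrow> ('a poly, 'd, 'e) module_scheme \<Rightarrow> bool" where
  "Ext1_is_torsion n M N \<longleftrightarrow>
     (\<forall>k \<pi>. is_presentation n k \<pi> M \<longrightarrow>
        (\<forall>\<phi>\<in>ext1_cocycles n k \<pi> M N. \<exists>\<alpha>\<in>Sn n.
            ext1_coboundary n k \<pi> M N (\<lambda>v. \<alpha> \<odot>\<^bsub>N\<^esub> \<phi> v)))"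

end

theory Submission
  imports Defs
begin


lemma ext_lemma:
  fixes K :: "('i \<Rightarrow> 'a::idom) set" and g :: "('i \<Rightarrow> 'a) \<Rightarrow> 'a"
  assumes "finite I" "\<forall>v\<in>K. \<forall>i. i \<notin> I \<longrightarrow> v i = 0"
   "\<forall>x\<in>K. \<forall>y\<in>K. \<forall>c e. (\<lambda>i. c * x i + e * y i) \<in> K"
   "\<forall>x\<in>K. \<forall>y\<in>K. \<forall>c e. g (\<lambda>i. c * x i + e * y i) = c * g x + e * g y"
  shows "\<exists>r a. r \<noteq> 0 \<and> (\<forall>v\<in>K. (\<Sum>i\<in>I. a i * v i) = r * g v)"
  using assms
proof (induction I arbitrary: K rule: finite_induct)
  case empty
  have "g v = 0" if "v \<in> K" for v
  proof -
    have "v = (\<lambda>i. 0 * v i + 0 * v i)" using empty.prems(1) that by auto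
    then have "g v = 0 * g v + 0 * g v" using empty.prems(3) that by metis
    then show ?thesis by simp
  qed
  then show ?case by (intro exI[of _ 1]) auto
next
  case (insert i0 I)
  define K0 where "K0 = {v\<in>K. v i0 = 0}"
  have "\<exists>r a. r \<noteq> 0 \<and> (\<forall>v\<in>K0. (\<Sum>i\<in>I. a i * v i) = r * g v)"
    apply (rule insert.IH)
    using insert.prems unfolding K0_def by auto
  then obtain r0 a0 where r0: "r0 \<noteq> 0" and a0: "\<forall>v\<in>K0. (\<Sum>i\<in>I. a0 i * v i) = r0 * g v"
    by blast
  show ?case
  proof (cases "\<exists>w\<in>K. w i0 \<noteq> 0")
    case False
    then have "K0 = K" unfolding K0_def by auto
    then show ?thesis using r0 a0 insert.hyps False by (intro exI[of _ r0] exI[of _ a0]) auto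
  next
    case True
    then obtain w where w: "w \<in> K" "w i0 \<noteq> 0" by blast
    define d where "d = w i0"
    define a where "a = (\<lambda>i. if i = i0 then r0 * g w - (\<Sum>i\<in>I. a0 i * w i) else d * a0 i)"
    have "(\<Sum>i\<in>insert i0 I. a i * v i) = r0 * d * g v" if v: "v \<in> K" for v
    proof -
      define u where "u = (\<lambda>i. d * v i + (- v i0) * w i)"
      have "u \<in> K" unfolding u_def using insert.prems(2) v w by blast
      moreover have "u i0 = 0" unfolding u_def d_def by (simp add: algebra_simps)
      ultimately have uK: "u \<in> K0" unfolding K0_def by simp
      have gu: "g u = d * g v - v i0 * g w" unfolding u_def using insert.prems(3) v w
        by (metis (no_types) minus_mult_commute mult_minus_left uminus_add_conv_diff add.commute mult.commute)
      have "(\<Sum>i\<in>I. a0 i * u i) = d * (\<Sum>i\<in>I. a0 i * v i) - v i0 * (\<Sum>i\<in>I. a0 i * w i)"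
        unfolding u_def by (simp add: algebra_simps sum_distrib_left sum_subtractf)
      with a0 uK gu have eq: "r0 * (d * g v - v i0 * g w) = d * (\<Sum>i\<in>I. a0 i * v i) - v i0 * (\<Sum>i\<in>I. a0 i * w i)"
        by auto
      have "(\<Sum>i\<in>insert i0 I. a i * v i) = a i0 * v i0 + (\<Sum>i\<in>I. a i * v i)"
        using insert.hyps by simp
      also have "(\<Sum>i\<in>I. a i * v i) = d * (\<Sum>i\<in>I. a0 i * v i)"
        unfolding a_def using insert.hyps by (auto simp: sum_distrib_left algebra_simps intro!: sum.cong)
      finally have "(\<Sum>i\<in>insert i0 I. a i * v i) = a i0 * v i0 + d * (\<Sum>i\<in>I. a0 i * v i)" .
      moreover have "a i0 = r0 * g w - (\<Sum>i\<in>I. a0 i * w i)" unfolding a_def by simp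
      ultimately have h1: "(\<Sum>i\<in>insert i0 I. a i * v i) + v i0 * (\<Sum>i\<in>I. a0 i * w i) = r0 * (g w * v i0) + d * (\<Sum>i\<in>I. a0 i * v i)"
        by (simp add: algebra_simps)
      have h3: "d * (r0 * g v) + v i0 * (\<Sum>i\<in>I. a0 i * w i) = r0 * (g w * v i0) + d * (\<Sum>i\<in>I. a0 i * v i)"
        using eq by (simp add: algebra_simps)
      from h1 h3 have "(\<Sum>i\<in>insert i0 I. a i * v i) + v i0 * (\<Sum>i\<in>I. a0 i * w i) = d * (r0 * g v) + v i0 * (\<Sum>i\<in>I. a0 i * w i)" by simp
      then show ?thesis by (simp add: algebra_simps)
    qed
    moreover have "r0 * d \<noteq> 0" using r0 w d_def by simp
    ultimately show ?thesis by blast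
  qed
qed



lemma coeff_trunc: "coeff (trunc_poly n p) j = (if j < n then coeff p j else 0)"
  unfolding trunc_poly_def by (simp add: coeff_sum coeff_monom)

lemma degree_trunc: "n \<ge> 1 \<Longrightarrow> degree (trunc_poly n p) < n"
proof -
  assume "n \<ge> 1"
  have "degree (trunc_poly n p) \<le> n - 1"
    by (rule degree_le) (auto simp: coeff_trunc)
  with \<open>n \<ge> 1\<close> show ?thesis by linarith
qed

lemma trunc_id: "degree p < n \<Longrightarrow> trunc_poly n p = p"
  by (auto simp: poly_eq_iff coeff_trunc coeff_eq_0)

lemma trunc_add: "trunc_poly n (p + q) = trunc_poly n p + trunc_poly n q"
  by (auto simp: poly_eq_iff coeff_trunc)

lemma trunc_sum: "trunc_poly n (\<Sum>i\<in>A. f i) = (\<Sum>i\<in>A. trunc_poly n (f i))"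
  by (induction A rule: infinite_finite_induct) (auto simp: trunc_add poly_eq_iff coeff_trunc)

lemma trunc_mult_trunc: "trunc_poly n (p * trunc_poly n q) = trunc_poly n (p * q)"
proof -
  have "coeff (p * trunc_poly n q) j = coeff (p * q) j" if "j < n" for j
    unfolding coeff_mult using that by (auto simp: coeff_trunc intro!: sum.cong)
  then show ?thesis by (auto simp: poly_eq_iff coeff_trunc)
qed

lemma trunc_trunc_mult: "trunc_poly n (trunc_poly n q * p) = trunc_poly n (q * p)"
  using trunc_mult_trunc[of n p q] by (simp add: mult.commute)

lemma trunc_const: "degree p < n \<Longrightarrow> trunc_poly n ([:c:] * p) = Polynomial.smult c p"
  using trunc_id[of "Polynomial.smult c p" n] degree_smult_le[of c p] by simp

lemma coeff_shift: "m < n \<Longrightarrow> j < n \<Longrightarrow> m + j = n - 1 \<Longrightarrow>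
   coeff (trunc_poly n (monom 1 m * p)) (n - 1) = coeff p j"
proof -
  assume a: "m < n" "j < n" "m + j = n - 1"
  then have "n - Suc m = j" by arith
  with a show ?thesis by (simp add: coeff_trunc coeff_monom_mult)
qed



lemma trunc_zero[simp]: "trunc_poly n 0 = 0"
  by (simp add: trunc_poly_def)

lemma trunc_smult: "degree p < n \<Longrightarrow> trunc_poly n (Polynomial.smult c p) = Polynomial.smult c p"
  using trunc_const by simp

theorem proposition3p4p2:
  fixes M :: "('a::idom poly, 'm) module" and n :: nat
  assumes "noetherian_ring TYPE('a)"
    and "n \<ge> 1"
    and "module (Rn n) M"
    and "finite_type (Rn n) M"
  shows "Ext1_is_torsion n M (Rn_mod n)"
proof -
  have n1: "n \<ge> 1" using assms(2) .
  interpret Mm: module "Rn n" M by (rule assms(3))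
  have carRn: "carrier (Rn n) = {p. degree p < n}" by (simp add: Rn_def)
  show ?thesis unfolding Ext1_is_torsion_def
  proof (intro allI impI ballI)
    fix k and \<pi> :: "(nat \<Rightarrow> 'a poly) \<Rightarrow> 'm" and \<phi>
    assume pres: "is_presentation n k \<pi> M" and phi: "\<phi> \<in> ext1_cocycles n k \<pi> M (Rn_mod n)"
    define K where "K = pres_kernel n k \<pi> M"
    define F :: "(nat \<Rightarrow> 'a poly) set" where "F = carrier (free_mod n k)"
    have F_def': "F = {v. (\<forall>i<k. degree (v i) < n) \<and> (\<forall>i\<ge>k. v i = 0)}"
      by (simp add: F_def free_mod_def)
    have K_def': "K = {v\<in>F. \<pi> v = \<zero>\<^bsub>M\<^esub>}" by (simp add: K_def F_def pres_kernel_def)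
    have pi_hom: "mod_hom (Rn n) (free_mod n k) M \<pi>" using pres is_presentation_def by auto
    then have pi_F: "\<forall>v\<in>F. \<pi> v \<in> carrier M"
      and pi_add: "\<forall>v\<in>F. \<forall>w\<in>F. \<pi> (\<lambda>i. v i + w i) = \<pi> v \<oplus>\<^bsub>M\<^esub> \<pi> w"
      and pi_sm: "\<forall>a. degree a < n \<longrightarrow> (\<forall>v\<in>F. \<pi> (\<lambda>i. trunc_poly n (a * v i)) = a \<odot>\<^bsub>M\<^esub> \<pi> v)"
      unfolding mod_hom_def F_def by (auto simp: free_mod_def Rn_def)
    have F_add: "(\<lambda>i. v i + w i) \<in> F" if "v \<in> F" "w \<in> F" for v w
      using that by (auto simp: F_def' intro: degree_add_less)
    have F_sm: "(\<lambda>i. trunc_poly n (a * v i)) \<in> F" if "v \<in> F" for v a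
      using that n1 by (auto simp: F_def' degree_trunc)
    have K_add: "(\<lambda>i. v i + w i) \<in> K" if "v \<in> K" "w \<in> K" for v w
      using that F_add pi_add by (auto simp: K_def')
    have K_sm: "(\<lambda>i. trunc_poly n (a * v i)) \<in> K" if "v \<in> K" "degree a < n" for v a
      using that F_sm pi_sm carRn by (auto simp: K_def')
    have KF: "K \<subseteq> F" by (auto simp: K_def')
    have const_sm: "(\<lambda>i. trunc_poly n ([:c:] * v i)) = (\<lambda>i. Polynomial.smult c (v i))" if "v \<in> F" for v c
    proof
      fix i show "trunc_poly n ([:c:] * v i) = Polynomial.smult c (v i)"
        using that by (cases "i < k") (auto simp: F_def' trunc_const trunc_smult)
    qed
    from phi have phi_K: "\<forall>v\<in>K. degree (\<phi> v) < n"
      and phi_add: "\<forall>v\<in>K. \<forall>w\<in>K. \<phi> (\<lambda>i. v i + w i) = \<phi> v + \<phi> w"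
      and phi_sm: "\<forall>a. degree a < n \<longrightarrow> (\<forall>v\<in>K. \<phi> (\<lambda>i. trunc_poly n (a * v i)) = trunc_poly n (a * \<phi> v))"
      unfolding ext1_cocycles_def mod_hom_def K_def
      by (auto simp: free_mod_def Rn_def Rn_mod_def)
    define co :: "(nat \<Rightarrow> 'a poly) \<Rightarrow> nat \<times> nat \<Rightarrow> 'a" where "co = (\<lambda>v (i, j). coeff (v i) j)"
    have inj: "inj co"
    proof (rule injI)
      fix v w assume "co v = co w"
      then have "coeff (v i) j = coeff (w i) j" for i j
        unfolding co_def by (metis (mono_tags) case_prod_conv)
      then show "v = w" by (auto simp: fun_eq_iff poly_eq_iff)
    qed
    define Kc where "Kc = co ` K"
    define gc where "gc = (\<lambda>x. coeff (\<phi> (inv_into UNIV co x)) (n - 1))"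
    define I where "I = {..<k} \<times> {..<n}"
    have gc_co: "gc (co v) = coeff (\<phi> v) (n - 1)" for v
      unfolding gc_def using inj by simp
    have "\<exists>r a. r \<noteq> 0 \<and> (\<forall>x\<in>Kc. (\<Sum>ij\<in>I. a ij * x ij) = r * gc x)"
    proof (rule ext_lemma)
      show "finite I" unfolding I_def by simp
      show "\<forall>x\<in>Kc. \<forall>ij. ij \<notin> I \<longrightarrow> x ij = 0"
      proof (intro ballI allI impI)
        fix x ij assume "x \<in> Kc" "ij \<notin> I"
        then obtain v i j where v: "v \<in> K" "x = co v" "ij = (i, j)" "\<not> (i < k \<and> j < n)"
          unfolding Kc_def I_def by (cases ij) auto
        then have "v \<in> F" using KF by auto
        with v show "x ij = 0" unfolding co_def
          by (cases "i < k") (auto simp: F_def' coeff_eq_0 not_less dest: le_less_trans)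
      qed
      have lin: "(\<lambda>ij. c * co v ij + e * co w ij) = co (\<lambda>i. trunc_poly n ([:c:] * v i) + trunc_poly n ([:e:] * w i))"
        if "v \<in> K" "w \<in> K" for v w c e
      proof -
        have "v \<in> F" "w \<in> F" using that KF by auto
        then have "(\<lambda>i. trunc_poly n ([:c:] * v i) + trunc_poly n ([:e:] * w i))
          = (\<lambda>i. Polynomial.smult c (v i) + Polynomial.smult e (w i))"
          using const_sm[of v c] const_sm[of w e] by (simp add: fun_eq_iff)
        then show ?thesis unfolding co_def by (auto simp: fun_eq_iff)
      qed
      have linK: "(\<lambda>i. trunc_poly n ([:c:] * v i) + trunc_poly n ([:e:] * w i)) \<in> K"
        if "v \<in> K" "w \<in> K" for v w c e
        using that n1 by (intro K_add K_sm) auto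
      show "\<forall>x\<in>Kc. \<forall>y\<in>Kc. \<forall>c e. (\<lambda>i. c * x i + e * y i) \<in> Kc"
        unfolding Kc_def using lin linK by auto
      show "\<forall>x\<in>Kc. \<forall>y\<in>Kc. \<forall>c e. gc (\<lambda>i. c * x i + e * y i) = c * gc x + e * gc y"
      proof (intro ballI allI)
        fix x y c e assume "x \<in> Kc" "y \<in> Kc"
        then obtain v w where vw: "v \<in> K" "w \<in> K" "x = co v" "y = co w" unfolding Kc_def by auto
        have "gc (\<lambda>i. c * x i + e * y i) = coeff (\<phi> (\<lambda>i. trunc_poly n ([:c:] * v i) + trunc_poly n ([:e:] * w i))) (n - 1)"
          using lin[OF vw(1,2)] vw gc_co by simp
        also have "\<phi> (\<lambda>i. trunc_poly n ([:c:] * v i) + trunc_poly n ([:e:] * w i))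
            = trunc_poly n ([:c:] * \<phi> v) + trunc_poly n ([:e:] * \<phi> w)"
        proof -
          have dc: "degree [:c:] < n" "degree [:e:] < n" using n1 by auto
          have A: "(\<lambda>i. trunc_poly n ([:c:] * v i)) \<in> K" "(\<lambda>i. trunc_poly n ([:e:] * w i)) \<in> K"
            using K_sm vw(1,2) dc by blast+
          have "\<phi> (\<lambda>i. trunc_poly n ([:c:] * v i) + trunc_poly n ([:e:] * w i))
            = \<phi> (\<lambda>i. trunc_poly n ([:c:] * v i)) + \<phi> (\<lambda>i. trunc_poly n ([:e:] * w i))"
            using bspec[OF bspec[OF phi_add A(1)] A(2)] by blast
          also have "\<phi> (\<lambda>i. trunc_poly n ([:c:] * v i)) = trunc_poly n ([:c:] * \<phi> v)"
            using phi_sm dc vw(1) by blast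
          also have "\<phi> (\<lambda>i. trunc_poly n ([:e:] * w i)) = trunc_poly n ([:e:] * \<phi> w)"
            using phi_sm dc vw(2) by blast
          finally show ?thesis .
        qed
        also have "\<dots> = Polynomial.smult c (\<phi> v) + Polynomial.smult e (\<phi> w)"
          using phi_K vw by (simp add: trunc_const trunc_smult)
        finally show "gc (\<lambda>i. c * x i + e * y i) = c * gc x + e * gc y"
          using vw gc_co by simp
      qed
    qed
    then obtain r a where r: "r \<noteq> 0" and ra: "\<forall>x\<in>Kc. (\<Sum>ij\<in>I. a ij * x ij) = r * gc x" by blast
    have key: "(\<Sum>ij\<in>I. a ij * co v ij) = r * coeff (\<phi> v) (n - 1)" if "v \<in> K" for v
      using ra that gc_co unfolding Kc_def by auto
    define cc where "cc = (\<lambda>i. \<Sum>j<n. monom (a (i, j)) (n - 1 - j))"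
    define \<psi> where "\<psi> = (\<lambda>v. trunc_poly n (\<Sum>i<k. cc i * v i))"
    have psi_fun: "coeff (\<psi> v) (n - 1) = (\<Sum>ij\<in>I. a ij * co v ij)" for v
    proof -
      have "coeff (\<psi> v) (n - 1) = (\<Sum>i<k. \<Sum>j<n. coeff (monom (a (i, j)) (n - 1 - j) * v i) (n - 1))"
        unfolding \<psi>_def cc_def using n1 by (simp add: coeff_trunc coeff_sum sum_distrib_right)
      also have "\<dots> = (\<Sum>i<k. \<Sum>j<n. a (i, j) * coeff (v i) j)"
        by (intro sum.cong refl) (auto simp: coeff_monom_mult)
      also have "\<dots> = (\<Sum>ij\<in>I. a ij * co v ij)"
        unfolding I_def co_def sum.cartesian_product by (simp add: case_prod_beta')
      finally show ?thesis .
    qed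
    have psi_add: "\<psi> (\<lambda>i. v i + w i) = \<psi> v + \<psi> w" for v w
      unfolding \<psi>_def by (simp add: distrib_left sum.distrib trunc_add)
    have psi_sm: "\<psi> (\<lambda>i. trunc_poly n (b * v i)) = trunc_poly n (b * \<psi> v)" for b v
    proof -
      have "\<psi> (\<lambda>i. trunc_poly n (b * v i)) = (\<Sum>i<k. trunc_poly n (cc i * trunc_poly n (b * v i)))"
        unfolding \<psi>_def by (simp add: trunc_sum)
      also have "\<dots> = (\<Sum>i<k. trunc_poly n (b * (cc i * v i)))"
        by (simp add: trunc_mult_trunc algebra_simps)
      also have "\<dots> = trunc_poly n (b * (\<Sum>i<k. cc i * v i))"
        by (simp add: trunc_sum sum_distrib_left)
      also have "\<dots> = trunc_poly n (b * \<psi> v)"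
        unfolding \<psi>_def by (simp add: trunc_mult_trunc)
      finally show ?thesis .
    qed
    have psi_hom: "mod_hom (Rn n) (free_mod n k) (Rn_mod n) \<psi>"
    proof -
      have "degree (\<psi> v) < n" for v unfolding \<psi>_def using n1 by (simp add: degree_trunc)
      then show ?thesis unfolding mod_hom_def
        by (auto simp: free_mod_def Rn_def Rn_mod_def psi_add psi_sm)
    qed
    have psi_eq: "\<psi> v = trunc_poly n ([:r:] * \<phi> v)" if v: "v \<in> K" for v
    proof -
      have rhs: "trunc_poly n ([:r:] * \<phi> v) = Polynomial.smult r (\<phi> v)"
        using phi_K v by (simp add: trunc_const trunc_smult)
      have "coeff (\<psi> v) j = r * coeff (\<phi> v) j" for j
      proof (cases "j < n")
        case False
        have "degree (\<phi> v) < j" using phi_K v False by auto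
        then show ?thesis using False by (simp add: \<psi>_def coeff_trunc coeff_eq_0)
      next
        case True
        define m where "m = n - 1 - j"
        have m: "m < n" "m + j = n - 1" using True unfolding m_def by auto
        have dm: "degree (monom (1::'a) m) < n" using m degree_monom_le le_less_trans by blast
        define u where "u = (\<lambda>i. trunc_poly n (monom 1 m * v i))"
        have uK: "u \<in> K" unfolding u_def using K_sm v dm by blast
        have "coeff (\<psi> v) j = coeff (trunc_poly n (monom 1 m * \<psi> v)) (n - 1)"
          using coeff_shift m True by metis
        also have "\<dots> = coeff (\<psi> u) (n - 1)" unfolding u_def psi_sm ..
        also have "\<dots> = r * coeff (\<phi> u) (n - 1)" using psi_fun key uK by simp
        also have "\<phi> u = trunc_poly n (monom 1 m * \<phi> v)" unfolding u_def using phi_sm v dm by blast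
        also have "coeff \<dots> (n - 1) = coeff (\<phi> v) j" using coeff_shift m True by metis
        finally show ?thesis .
      qed
      then show ?thesis using rhs by (simp add: poly_eq_iff)
    qed
    show "\<exists>\<alpha>\<in>Sn n. ext1_coboundary n k \<pi> M (Rn_mod n) (\<lambda>v. \<alpha> \<odot>\<^bsub>Rn_mod n\<^esub> \<phi> v)"
    proof (intro bexI)
      show "[:r:] \<in> Sn n" using r n1 by (simp add: Sn_def Rn_def)
      show "ext1_coboundary n k \<pi> M (Rn_mod n) (\<lambda>v. [:r:] \<odot>\<^bsub>Rn_mod n\<^esub> \<phi> v)"
        unfolding ext1_coboundary_def
        using psi_hom psi_eq by (intro exI[of _ \<psi>]) (auto simp: Rn_mod_def K_def)
    qed
  qed
qed

end
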